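(* Let $f\in\mathbb B(X)$ be monotone and $x\in X$. Then $$\mathbf{Bz}_x(\omega_f)=\mathbf{Bz}_x(\nu_f)=\mathbf I_x(f).$$
   Context: $X$ is a fixed finite set of $n=|X|$ variables; $\mathbb B(X)$ is the set of Boolean functions $\{0,1\}^X\to\{0,1\}$; $f_{x/c}$ is $f$ with $x$ fixed to $c$; $f$ is monotone if $f_{x/1}\ge f_{x/0}$ pointwise for every $x$. For assignments $\mathbf u$ over $S$ and $\mathbf w$ over $X\setminus S$, $\mathbf u;\mathbf w$ is their concatenation. Influence: $\mathbf I_x(f)=\mathbb E[f_{x/1}\oplus f_{x/0}]$ (uniform distribution on $\{0,1\}^X$). For a cooperative game $v:2^X\to\mathbb R$, $\partial_xv(S)=v(S\cup\{x\})-v(S\setminus\{x\})$ and the Banzhaf value is $\mathbf{Bz}_x(v)=2^{-(n-1)}\sum_{S\subseteq X\setminus\{x\}}\partial_xv(S)$. Dominating CGM: $\omega_f(S)=1$ if $\exists\mathbf u\in\{0,1\}^S\ \forall\mathbf w\in\{0,1\}^{X\setminus S}: f(\mathbf u;\mathbf w)=1$, else $0$. Rectifying CGM: $\nu_f(S)=1$ if $\forall\mathbf w\in\{0,1\}^{X\setminus S}\ \exists\mathbf u\in\{0,1\}^S: f(\mathbf u;\mathbf w)=1$, else $0$. *)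

theory Defs
  imports Complex_Main "HOL-Library.FuncSet"
begin

text \<open>An assignment over S is an element of  PiE S (\<lambda>_. UNIV :: bool set)
  (True = 1, False = 0).  A Boolean function in B(X) is
  f :: ('a \<Rightarrow> bool) \<Rightarrow> bool, of which only the values on assignments over X matter.\<close>

abbreviation assignments :: "'a set \<Rightarrow> ('a \<Rightarrow> bool) set" where
  "assignments S \<equiv> S \<rightarrow>\<^sub>E (UNIV :: bool set)"

definition concat :: "'a set \<Rightarrow> ('a \<Rightarrow> bool) \<Rightarrow> ('a \<Rightarrow> bool) \<Rightarrow> ('a \<Rightarrow> bool)" where
  "concat S u w = (\<lambda>y. if y \<in> S then u y else w y)"

definition fix_var :: "(('a \<Rightarrow> bool) \<Rightarrow> bool) \<Rightarrow> 'a \<Rightarrow> bool \<Rightarrow> (('a \<Rightarrow> bool) \<Rightarrow> bool)" where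
  "fix_var f x c = (\<lambda>a. f (a(x := c)))"

definition monotone_bf :: "'a set \<Rightarrow> (('a \<Rightarrow> bool) \<Rightarrow> bool) \<Rightarrow> bool" where
  "monotone_bf X f \<longleftrightarrow>
     (\<forall>x\<in>X. \<forall>a\<in>assignments X. fix_var f x False a \<le> fix_var f x True a)"

definition influence :: "'a set \<Rightarrow> 'a \<Rightarrow> (('a \<Rightarrow> bool) \<Rightarrow> bool) \<Rightarrow> real" where
  "influence X x f =
     (\<Sum>a\<in>assignments X. (if fix_var f x True a \<noteq> fix_var f x False a then 1 else 0))
       / real (card (assignments X))"

definition partial_game :: "('a set \<Rightarrow> real) \<Rightarrow> 'a \<Rightarrow> 'a set \<Rightarrow> real" where
  "partial_game v x S = v (S \<union> {x}) - v (S - {x})"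

definition banzhaf :: "'a set \<Rightarrow> 'a \<Rightarrow> ('a set \<Rightarrow> real) \<Rightarrow> real" where
  "banzhaf X x v = (\<Sum>S\<in>Pow (X - {x}). partial_game v x S) / 2 ^ (card X - 1)"

definition dominating :: "'a set \<Rightarrow> (('a \<Rightarrow> bool) \<Rightarrow> bool) \<Rightarrow> 'a set \<Rightarrow> real" where
  "dominating X f S =
     (if \<exists>u\<in>assignments S. \<forall>w\<in>assignments (X - S). f (concat S u w) then 1 else 0)"

definition rectifying :: "'a set \<Rightarrow> (('a \<Rightarrow> bool) \<Rightarrow> bool) \<Rightarrow> 'a set \<Rightarrow> real" where
  "rectifying X f S =
     (if \<forall>w\<in>assignments (X - S). \<exists>u\<in>assignments S. f (concat S u w) then 1 else 0)"

end

theory Submission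
  imports Defs
begin

definition chi :: "'a set \<Rightarrow> 'a set \<Rightarrow> ('a \<Rightarrow> bool)" where
  "chi X S = (\<lambda>y. if y \<in> X then y \<in> S else undefined)"

lemma chi_in: "chi X S \<in> assignments X"
  by (auto simp: chi_def)

lemma upd_in: "x \<in> X \<Longrightarrow> a \<in> assignments X \<Longrightarrow> a(x := c) \<in> assignments X"
  by (auto simp: PiE_def extensional_def)

lemma mono_gen:
  assumes fin: "finite X" and m: "monotone_bf X f" and b: "b \<in> assignments X"
  shows "finite D \<Longrightarrow> \<forall>a\<in>assignments X. (\<forall>y. a y \<longrightarrow> b y) \<and> {y\<in>X. b y \<and> \<not> a y} = D \<longrightarrow> f a \<longrightarrow> f b"
proof (induction D rule: finite_induct)
  case empty
  show ?case
  proof (intro ballI impI)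
    fix a assume a: "a \<in> assignments X" and h: "(\<forall>y. a y \<longrightarrow> b y) \<and> {y\<in>X. b y \<and> \<not> a y} = {}" and fa: "f a"
    have "a = b"
    proof
      fix y show "a y = b y"
        using a b h by (cases "y \<in> X") (auto simp: PiE_def extensional_def)
    qed
    thus "f b" using fa by simp
  qed
next
  case (insert d D)
  show ?case
  proof (intro ballI impI)
    fix a assume a: "a \<in> assignments X" and h: "(\<forall>y. a y \<longrightarrow> b y) \<and> {y\<in>X. b y \<and> \<not> a y} = insert d D" and fa: "f a"
    have dX: "d \<in> X" and nad: "\<not> a d" and bd: "b d" using h by auto
    let ?a = "a(d := True)"
    have a': "?a \<in> assignments X" using a dX by (auto simp: PiE_def extensional_def)
    have "fix_var f d False a \<le> fix_var f d True a" using m dX a unfolding monotone_bf_def by blast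
    moreover have "a(d := False) = a" using nad fun_upd_idem[of a d False] by simp
    ultimately have "f ?a" using fa by (simp add: fix_var_def le_bool_def)
    moreover have "(\<forall>y. ?a y \<longrightarrow> b y) \<and> {y\<in>X. b y \<and> \<not> ?a y} = D"
      using h insert.hyps(2) bd by auto
    ultimately show "f b" using insert.IH a' by blast
  qed
qed

lemma mono_le:
  assumes fin: "finite X" and m: "monotone_bf X f" and a: "a \<in> assignments X"
    and b: "b \<in> assignments X" and le: "\<forall>y. a y \<longrightarrow> b y" and fa: "f a"
  shows "f b"
  using mono_gen[OF fin m b, of "{y\<in>X. b y \<and> \<not> a y}"] fin a le fa by auto

lemma concat_in:
  assumes "S \<subseteq> X" "u \<in> assignments S" "w \<in> assignments (X - S)"
  shows "concat S u w \<in> assignments X"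
  using assms by (auto simp: concat_def PiE_def extensional_def)

lemma games_eq:
  assumes fin: "finite X" and m: "monotone_bf X f" and S: "S \<subseteq> X"
  shows "dominating X f S = (if f (chi X S) then 1 else 0)"
    and "rectifying X f S = (if f (chi X S) then 1 else 0)"
proof -
  define uT where "uT = (\<lambda>y\<in>S. True)"
  define wF where "wF = (\<lambda>y\<in>X - S. False)"
  have uT: "uT \<in> assignments S" and wF: "wF \<in> assignments (X - S)" by (auto simp: uT_def wF_def)
  have c1: "\<And>u. u \<in> assignments S \<Longrightarrow> f (concat S u wF) \<Longrightarrow> f (chi X S)"
  proof -
    fix u assume u: "u \<in> assignments S" and fu: "f (concat S u wF)"
    have le: "\<forall>y. concat S u wF y \<longrightarrow> chi X S y"
      using S u by (auto simp: concat_def wF_def chi_def PiE_def extensional_def)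
    show "f (chi X S)"
      by (rule mono_le[of X f "concat S u wF" "chi X S", OF fin m concat_in[OF S u wF] chi_in le fu])
  qed
  have c2: "\<And>w. w \<in> assignments (X - S) \<Longrightarrow> f (chi X S) \<Longrightarrow> f (concat S uT w)"
  proof -
    fix w assume w: "w \<in> assignments (X - S)" and fu: "f (chi X S)"
    have le: "\<forall>y. chi X S y \<longrightarrow> concat S uT w y"
      using S w by (auto simp: concat_def uT_def chi_def PiE_def extensional_def)
    show "f (concat S uT w)"
      by (rule mono_le[of X f "chi X S" "concat S uT w", OF fin m chi_in concat_in[OF S uT w] le fu])
  qed
  show "dominating X f S = (if f (chi X S) then 1 else 0)"
    unfolding dominating_def using c1 c2 uT wF by metis
  show "rectifying X f S = (if f (chi X S) then 1 else 0)"
    unfolding rectifying_def using c1 c2 uT wF by metis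
qed

lemma bij:
  assumes x: "x \<in> X"
  shows "bij_betw (\<lambda>(S, c). (chi X S)(x := c)) (Pow (X - {x}) \<times> UNIV) (assignments X)"
proof (rule bij_betw_byWitness[where f' = "\<lambda>a. ({y\<in>X - {x}. a y}, a x)"])
  show "\<forall>p\<in>Pow (X - {x}) \<times> UNIV. (\<lambda>a. ({y \<in> X - {x}. a y}, a x)) ((\<lambda>(S, c). (chi X S)(x := c)) p) = p"
    by (auto simp: chi_def)
  show "\<forall>a\<in>assignments X. (\<lambda>(S, c). (chi X S)(x := c)) ((\<lambda>a. ({y \<in> X - {x}. a y}, a x)) a) = a"
  proof
    fix a assume a: "a \<in> assignments X"
    show "(\<lambda>(S, c). (chi X S)(x := c)) ((\<lambda>a. ({y \<in> X - {x}. a y}, a x)) a) = a"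
    proof
      fix y show "((\<lambda>(S, c). (chi X S)(x := c)) ((\<lambda>a. ({y \<in> X - {x}. a y}, a x)) a)) y = a y"
        using a by (auto simp: chi_def PiE_def extensional_def)
    qed
  qed
  show "(\<lambda>(S, c). (chi X S)(x := c)) ` (Pow (X - {x}) \<times> UNIV) \<subseteq> assignments X"
    using x by (auto intro!: upd_in chi_in)
  show "(\<lambda>a. ({y \<in> X - {x}. a y}, a x)) ` assignments X \<subseteq> Pow (X - {x}) \<times> UNIV"
    by auto
qed

theorem mainTheorem15:
  fixes X :: "'a set" and f :: "('a \<Rightarrow> bool) \<Rightarrow> bool" and x :: 'a
  assumes "finite X"
    and "monotone_bf X f"
    and "x \<in> X"
  shows "banzhaf X x (dominating X f) = influence X x f
       \<and> banzhaf X x (rectifying X f) = influence X x f"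
proof -
  note fin = assms(1) and m = assms(2) and x = assms(3)
  define g where "g S = (if f (chi X S) then 1 else 0 :: real)" for S
  define h where "h a = (if fix_var f x True a \<noteq> fix_var f x False a then 1 else 0 :: real)" for a
  define B where "B = (\<Sum>S\<in>Pow (X - {x}). partial_game g x S)"
  have key: "\<And>S. S \<in> Pow (X - {x}) \<Longrightarrow> h ((chi X S)(x := c)) = partial_game g x S" for c
  proof -
    fix S assume S: "S \<in> Pow (X - {x})"
    have e1: "(chi X S)(x := c, x := True) = chi X (S \<union> {x})"
      using x by (intro ext) (auto simp: chi_def)
    have e2: "(chi X S)(x := c, x := False) = chi X S"
      using x S by (intro ext) (auto simp: chi_def)
    have e3: "S - {x} = S" using S by auto
    have le: "\<forall>y. chi X S y \<longrightarrow> chi X (S \<union> {x}) y" by (auto simp: chi_def)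
    have mo: "f (chi X S) \<Longrightarrow> f (chi X (S \<union> {x}))"
      using mono_le[of X f "chi X S" "chi X (S \<union> {x})", OF fin m chi_in chi_in le] by blast
    show "h ((chi X S)(x := c)) = partial_game g x S"
      unfolding h_def partial_game_def g_def fix_var_def e1 e2 e3 using mo by auto
  qed
  have sumA: "(\<Sum>a\<in>assignments X. h a) = 2 * B"
  proof -
    have "(\<Sum>a\<in>assignments X. h a) = (\<Sum>p\<in>Pow (X - {x}) \<times> UNIV. h ((\<lambda>(S, c). (chi X S)(x := c)) p))"
      using sum.reindex_bij_betw[OF bij[OF x], of h] by simp
    also have "\<dots> = (\<Sum>S\<in>Pow (X - {x}). \<Sum>c\<in>(UNIV::bool set). h ((chi X S)(x := c)))"
      by (subst sum.cartesian_product) (simp add: case_prod_beta)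
    also have "\<dots> = (\<Sum>S\<in>Pow (X - {x}). 2 * partial_game g x S)"
      by (rule sum.cong) (simp_all add: key UNIV_bool)
    finally show ?thesis by (simp add: B_def sum_distrib_left)
  qed
  have cardA: "card (assignments X) = 2 ^ (card X - 1) * 2"
  proof -
    have "card (assignments X) = card (Pow (X - {x}) \<times> (UNIV::bool set))"
      using bij_betw_same_card[OF bij[OF x]] by simp
    also have "\<dots> = 2 ^ (card X - 1) * 2"
      using fin x by (simp add: card_cartesian_product card_Pow card_Diff_singleton)
    finally show ?thesis .
  qed
  have inf: "influence X x f = B / 2 ^ (card X - 1)"
    unfolding influence_def h_def[symmetric] sumA cardA by simp
  have gm: "\<And>v. (\<forall>S\<subseteq>X. v S = g S) \<Longrightarrow> banzhaf X x v = B / 2 ^ (card X - 1)"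
  proof -
    fix v :: "'a set \<Rightarrow> real" assume v: "\<forall>S\<subseteq>X. v S = g S"
    have "\<And>S. S \<in> Pow (X - {x}) \<Longrightarrow> partial_game v x S = partial_game g x S"
    proof -
      fix S assume S: "S \<in> Pow (X - {x})"
      have "S \<union> {x} \<subseteq> X" "S - {x} \<subseteq> X" using S x by auto
      then show "partial_game v x S = partial_game g x S"
        unfolding partial_game_def using v by simp
    qed
    then show "banzhaf X x v = B / 2 ^ (card X - 1)"
      unfolding banzhaf_def B_def by (metis (no_types, lifting) sum.cong)
  qed
  show ?thesis
    using gm[of "dominating X f"] gm[of "rectifying X f"] inf games_eq[OF fin m]
    by (simp add: g_def)
qed

end
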